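(* Let $p,q$ be positive integers and let $\mathbb T$ be a finite rooted tree whose root has at most $q$ children, in which every other vertex in an even layer has at most $q$ children and every vertex in an odd layer has at most $p$ children. Then its adjacency matrix $A^{\mathbb T}$ satisfies $\|A^{\mathbb T}\|\le\sqrt p+\sqrt q$.
   Context: Layers are indexed by distance from the root; the root forms layer $0$ (even). $\|\cdot\|$ denotes the operator norm. *)

theory Defs
  imports "HOL-Analysis.Analysis"
begin

text \<open>The edges are
{v, par v} for v \<noteq> r (the value par r is irrelevant).\<close>

definition rooted_tree :: "'n::finite \<Rightarrow> ('n \<Rightarrow> 'n) \<Rightarrow> bool" where
  "rooted_tree r par \<longleftrightarrow> (\<forall>v. \<exists>k. (par ^^ k) v = r)"

definition tree_depth :: "'n \<Rightarrow> ('n \<Rightarrow> 'n) \<Rightarrow> 'n \<Rightarrow> nat" where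
  "tree_depth r par v = (LEAST k. (par ^^ k) v = r)"

definition tree_children :: "'n \<Rightarrow> ('n \<Rightarrow> 'n) \<Rightarrow> 'n \<Rightarrow> 'n set" where
  "tree_children r par u = {v. v \<noteq> r \<and> par v = u}"

definition tree_adj :: "'n::finite \<Rightarrow> ('n \<Rightarrow> 'n) \<Rightarrow> real ^ 'n ^ 'n" where
  "tree_adj r par = (\<chi> i j. if (i \<noteq> r \<and> par i = j) \<or> (j \<noteq> r \<and> par j = i) then 1 else 0)"

end

theory Submission
  imports Defs
begin

lemma depth_par:
  assumes "rooted_tree r par" and "v \<noteq> r"
  shows "tree_depth r par (par v) + 1 = tree_depth r par v"
proof -
  define d where "d = tree_depth r par v"
  have ex: "\<exists>k. (par ^^ k) w = r" for w using assms(1) unfolding rooted_tree_def by blast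
  have hd: "(par ^^ d) v = r" unfolding d_def tree_depth_def by (rule LeastI_ex[OF ex])
  have "d \<noteq> 0" using hd assms(2) by (metis funpow_0)
  then obtain e where e: "d = Suc e" by (cases d) auto
  have "(par ^^ e) (par v) = r" using hd e by (simp add: funpow_Suc_right del: funpow.simps)
  hence le1: "tree_depth r par (par v) \<le> e" unfolding tree_depth_def by (rule Least_le)
  define f where "f = tree_depth r par (par v)"
  have hf: "(par ^^ f) (par v) = r" unfolding f_def tree_depth_def by (rule LeastI_ex[OF ex])
  hence "(par ^^ Suc f) v = r" by (simp add: funpow_Suc_right del: funpow.simps)
  hence "d \<le> Suc f" unfolding d_def tree_depth_def by (rule Least_le)
  thus ?thesis using le1 e unfolding d_def f_def by simp
qed

definition starm :: "'n::finite \<Rightarrow> ('n \<Rightarrow> 'n) \<Rightarrow> ('n \<Rightarrow> bool) \<Rightarrow> real ^ 'n ^ 'n" where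
  "starm r par C = (\<chi> i j. if (i \<noteq> r \<and> par i = j \<and> C j) \<or> (j \<noteq> r \<and> par j = i \<and> C i) then 1 else 0)"

lemma star_bound:
  fixes r :: "'n::finite" and par and C :: "'n \<Rightarrow> bool" and x :: "real^'n"
  assumes H1: "\<And>v. v \<noteq> r \<Longrightarrow> C (par v) \<Longrightarrow> \<not> C v"
  and H2: "\<And>u. C u \<Longrightarrow> card {v. v \<noteq> r \<and> par v = u} \<le> m"
  shows "norm (starm r par C *v x) \<le> sqrt (real m) * norm x"
proof -
  define ch where "ch u = {v. v \<noteq> r \<and> par v = u}" for u
  define a where "a i = (if i \<noteq> r \<and> C (par i) then x $ (par i) else 0)" for i
  define b where "b i = (if C i then (\<Sum>c\<in>ch i. x $ c) else 0)" for i
  have Mx: "(starm r par C *v x) $ i = a i + b i" for i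
  proof -
    have "(starm r par C *v x) $ i = (\<Sum>j\<in>UNIV. (if i \<noteq> r \<and> par i = j \<and> C j then x $ j else 0)
        + (if j \<noteq> r \<and> par j = i \<and> C i then x $ j else 0))"
      unfolding matrix_vector_mult_def starm_def using H1
      by (auto intro!: sum.cong)
    also have "\<dots> = a i + b i"
    proof -
      have e1: "(if i \<noteq> r \<and> par i = j \<and> C j then x $ j else 0) = (if j = par i then a i else 0)" for j
        unfolding a_def by auto
      have "(\<Sum>j\<in>UNIV. (if i \<noteq> r \<and> par i = j \<and> C j then x $ j else 0)) = a i"
        unfolding e1 by simp
      moreover have "(\<Sum>j\<in>UNIV. (if j \<noteq> r \<and> par j = i \<and> C i then x $ j else 0)) = b i"
        unfolding b_def ch_def by (auto simp: sum.inter_filter[symmetric])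
      ultimately show ?thesis by (simp add: sum.distrib)
    qed
    finally show ?thesis .
  qed
  have ab: "a i * b i = 0" for i using H1 unfolding a_def b_def by auto
  have nx: "(norm x)\<^sup>2 = (\<Sum>i\<in>UNIV. (x $ i)\<^sup>2)"
    unfolding power2_norm_eq_inner inner_vec_def by (simp add: power2_eq_square)
  have nM: "(norm (starm r par C *v x))\<^sup>2 = (\<Sum>i\<in>UNIV. (a i)\<^sup>2) + (\<Sum>i\<in>UNIV. (b i)\<^sup>2)"
  proof -
    have "(norm (starm r par C *v x))\<^sup>2 = (\<Sum>i\<in>UNIV. (a i + b i)\<^sup>2)"
      unfolding power2_norm_eq_inner inner_vec_def by (simp add: power2_eq_square Mx)
    also have "\<dots> = (\<Sum>i\<in>UNIV. (a i)\<^sup>2 + (b i)\<^sup>2)"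
    proof (rule sum.cong)
      fix i
      have "(a i + b i)\<^sup>2 = (a i)\<^sup>2 + (b i)\<^sup>2 + 2 * (a i * b i)" by (simp add: power2_sum)
      thus "(a i + b i)\<^sup>2 = (a i)\<^sup>2 + (b i)\<^sup>2" by (simp only: ab)
    qed simp
    finally show ?thesis by (simp add: sum.distrib)
  qed
  have sa: "(\<Sum>i\<in>UNIV. (a i)\<^sup>2) \<le> m * (\<Sum>u\<in>UNIV. if C u then (x $ u)\<^sup>2 else 0)"
  proof -
    have "(\<Sum>i\<in>UNIV. (a i)\<^sup>2) = (\<Sum>i\<in>UNIV. \<Sum>u\<in>UNIV. if i \<noteq> r \<and> par i = u \<and> C u then (x $ u)\<^sup>2 else 0)"
    proof (rule sum.cong)
      fix i
      have "(if i \<noteq> r \<and> par i = u \<and> C u then (x $ u)\<^sup>2 else 0) = (if u = par i then (a i)\<^sup>2 else 0)" for u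
        unfolding a_def by auto
      thus "(a i)\<^sup>2 = (\<Sum>u\<in>UNIV. if i \<noteq> r \<and> par i = u \<and> C u then (x $ u)\<^sup>2 else 0)" by simp
    qed simp
    also have "\<dots> = (\<Sum>u\<in>UNIV. \<Sum>i\<in>UNIV. if i \<noteq> r \<and> par i = u \<and> C u then (x $ u)\<^sup>2 else 0)"
      by (rule sum.swap)
    also have "\<dots> = (\<Sum>u\<in>UNIV. if C u then real (card (ch u)) * (x $ u)\<^sup>2 else 0)"
      by (rule sum.cong) (auto simp: ch_def sum.inter_filter[symmetric])
    also have "\<dots> \<le> (\<Sum>u\<in>UNIV. m * (if C u then (x $ u)\<^sup>2 else 0))"
      by (rule sum_mono) (auto simp: ch_def intro!: mult_right_mono H2)
    finally show ?thesis by (simp add: sum_distrib_left)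
  qed
  have sb: "(\<Sum>i\<in>UNIV. (b i)\<^sup>2) \<le> m * (\<Sum>u\<in>UNIV. if \<not> C u then (x $ u)\<^sup>2 else 0)"
  proof -
    have "(\<Sum>i\<in>UNIV. (b i)\<^sup>2) \<le> (\<Sum>i\<in>UNIV. m * (if C i then (\<Sum>c\<in>ch i. (x $ c)\<^sup>2) else 0))"
    proof (rule sum_mono)
      fix i
      show "(b i)\<^sup>2 \<le> m * (if C i then (\<Sum>c\<in>ch i. (x $ c)\<^sup>2) else 0)"
      proof (cases "C i")
        case True
        have "(b i)\<^sup>2 \<le> (\<Sum>c\<in>ch i. (x $ c)\<^sup>2) * real (card (ch i))"
          using True unfolding b_def by (simp add: sum_squared_le_sum_of_squares)
        also have "\<dots> \<le> (\<Sum>c\<in>ch i. (x $ c)\<^sup>2) * m"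
          using H2[OF True] by (intro mult_left_mono) (auto simp: ch_def sum_nonneg)
        finally show ?thesis using True by (simp add: mult.commute)
      qed (simp add: b_def)
    qed
    also have "\<dots> = m * (\<Sum>i\<in>UNIV. \<Sum>c\<in>UNIV. if c \<noteq> r \<and> par c = i \<and> C i then (x $ c)\<^sup>2 else 0)"
      by (auto simp: sum_distrib_left ch_def sum.inter_filter[symmetric] intro!: sum.cong)
    also have "\<dots> = m * (\<Sum>c\<in>UNIV. \<Sum>i\<in>UNIV. if c \<noteq> r \<and> par c = i \<and> C i then (x $ c)\<^sup>2 else 0)"
      by (subst sum.swap) (rule refl)
    also have "\<dots> = m * (\<Sum>c\<in>UNIV. if c \<noteq> r \<and> C (par c) then (x $ c)\<^sup>2 else 0)"
    proof -
      have "(if c \<noteq> r \<and> par c = i \<and> C i then (x $ c)\<^sup>2 else 0) = (if i = par c then (if c \<noteq> r \<and> C (par c) then (x $ c)\<^sup>2 else 0) else 0)" for c i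
        by auto
      thus ?thesis by simp
    qed
    also have "\<dots> \<le> m * (\<Sum>u\<in>UNIV. if \<not> C u then (x $ u)\<^sup>2 else 0)"
      using H1 by (intro mult_left_mono sum_mono) auto
    finally show ?thesis .
  qed
  have "(norm (starm r par C *v x))\<^sup>2 \<le> m * (norm x)\<^sup>2"
  proof -
    have "(\<Sum>u\<in>UNIV. if C u then (x $ u)\<^sup>2 else 0) + (\<Sum>u\<in>UNIV. if \<not> C u then (x $ u)\<^sup>2 else 0)
        = (\<Sum>i\<in>UNIV. (x $ i)\<^sup>2)"
      by (simp add: sum.distrib[symmetric]) (rule sum.cong, auto)
    hence "real m * (\<Sum>u\<in>UNIV. if C u then (x $ u)\<^sup>2 else 0) + real m * (\<Sum>u\<in>UNIV. if \<not> C u then (x $ u)\<^sup>2 else 0)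
        = real m * (\<Sum>i\<in>UNIV. (x $ i)\<^sup>2)" by (simp only: distrib_left[symmetric])
    thus ?thesis unfolding nM nx using sa sb by linarith
  qed
  hence "norm (starm r par C *v x) \<le> sqrt (m * (norm x)\<^sup>2)"
    by (simp add: real_le_rsqrt)
  thus ?thesis by (simp add: real_sqrt_mult)
qed

theorem lemmaC3:
  fixes p q :: nat and r :: "'n::finite" and par :: "'n \<Rightarrow> 'n"
  assumes "p > 0" and "q > 0"
    and "rooted_tree r par"
    and "card (tree_children r par r) \<le> q"
    and "\<And>u. u \<noteq> r \<Longrightarrow> even (tree_depth r par u) \<Longrightarrow> card (tree_children r par u) \<le> q"
    and "\<And>u. odd (tree_depth r par u) \<Longrightarrow> card (tree_children r par u) \<le> p"
  shows "onorm (\<lambda>x. tree_adj r par *v x) \<le> sqrt (real p) + sqrt (real q)"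
proof (rule onorm_le)
  fix x :: "real^'n"
  define E where "E v = even (tree_depth r par v)" for v
  define Od where "Od v = odd (tree_depth r par v)" for v
  have dp: "v \<noteq> r \<Longrightarrow> tree_depth r par (par v) + 1 = tree_depth r par v" for v
    using depth_par[OF assms(3)] by blast
  have d0: "tree_depth r par r = 0" unfolding tree_depth_def by (rule Least_eq_0) simp
  have excl: "\<not> (i \<noteq> r \<and> par i = j \<and> j \<noteq> r \<and> par j = i)" for i j
    using dp[of i] dp[of j] by auto
  have split: "tree_adj r par *v x = starm r par E *v x + starm r par Od *v x"
  proof -
    have "tree_adj r par $ i $ j = starm r par E $ i $ j + starm r par Od $ i $ j" for i j
      using excl[of i j] unfolding tree_adj_def starm_def E_def Od_def by auto
    thus ?thesis
      by (simp add: vec_eq_iff matrix_vector_mult_def sum.distrib[symmetric] distrib_right)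
  qed
  have bE: "norm (starm r par E *v x) \<le> sqrt (real q) * norm x"
  proof (rule star_bound)
    show "\<And>v. v \<noteq> r \<Longrightarrow> E (par v) \<Longrightarrow> \<not> E v" unfolding E_def using dp by (metis even_Suc Suc_eq_plus1)
    show "\<And>u. E u \<Longrightarrow> card {v. v \<noteq> r \<and> par v = u} \<le> q"
      using assms(4,5) unfolding E_def tree_children_def by metis
  qed
  have bO: "norm (starm r par Od *v x) \<le> sqrt (real p) * norm x"
  proof (rule star_bound)
    show "\<And>v. v \<noteq> r \<Longrightarrow> Od (par v) \<Longrightarrow> \<not> Od v" unfolding Od_def using dp by (metis even_Suc Suc_eq_plus1)
    show "\<And>u. Od u \<Longrightarrow> card {v. v \<noteq> r \<and> par v = u} \<le> p"
      using assms(6) unfolding Od_def tree_children_def by metis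
  qed
  have "norm (tree_adj r par *v x) \<le> norm (starm r par E *v x) + norm (starm r par Od *v x)"
    unfolding split by (rule norm_triangle_ineq)
  thus "norm (tree_adj r par *v x) \<le> (sqrt (real p) + sqrt (real q)) * norm x"
    using bE bO by (simp add: distrib_right)
qed

end
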